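(* Let $\mathbb{G}$ be an $E$-group and $\alpha_1,\alpha_2,\beta\subsetneq E$, and suppose $\mathbb{G}[\alpha_1]$ and $\mathbb{G}[\alpha_2]$ are $2$-acyclic. Then for every vertex $x$ of the free amalgam $\mathrm{Cay}(\mathbb{G}[\alpha_1])\oplus\mathrm{Cay}(\mathbb{G}[\alpha_2])$, the $\beta$-connected component of $x$ is isomorphic, as an $E$-graph, either to $\mathrm{Cay}(\mathbb{G}[\beta\cap\alpha_1])$, or to $\mathrm{Cay}(\mathbb{G}[\beta\cap\alpha_2])$, or to the free amalgam $\mathrm{Cay}(\mathbb{G}[\beta\cap\alpha_1])\oplus\mathrm{Cay}(\mathbb{G}[\beta\cap\alpha_2])$.
   Context: Let $E$ be a finite set. An $E$-group is a group $\mathbb{G}$ with $E\subseteq\mathbb{G}$ generating it and each $e\in E$ satisfying $e\neq1$, $e^2=1$; $\mathbb{G}[\gamma]$ is the subgroup generated by $\gamma\subseteq E$, regarded as a $\gamma$-group. A coset cycle of length $n\ge2$ in a $\gamma$-group $\mathbb{K}$ is $(g_i,\gamma_i)_{i\in\mathbb{Z}_n}$ with $\gamma_i\subseteq\gamma$, $g_{i+1}\in g_i\mathbb{K}[\gamma_i]$ and $g_i\mathbb{K}[\gamma_i\cap\gamma_{i-1}]\cap g_{i+1}\mathbb{K}[\gamma_i\cap\gamma_{i+1}]=\emptyset$; $2$-acyclic means there is no coset cycle of length $2$. An $E$-graph is $(V,(R_e)_{e\in E})$ with each $R_e$ symmetric and each vertex having at most one $R_e$-neighbour; an isomorphism of $E$-graphs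 is a bijection preserving each $R_e$ in both directions. $\mathrm{Cay}(\mathbb{G}[\gamma])$ is the $E$-graph on $\mathbb{G}[\gamma]$ with $R_e=\{(g,ge)\}$ for $e\in\gamma$ and $R_e=\emptyset$ for $e\notin\gamma$. For $\gamma_1,\gamma_2\subseteq E$, the free amalgam $\mathrm{Cay}(\mathbb{G}[\gamma_1])\oplus\mathrm{Cay}(\mathbb{G}[\gamma_2])$ is the $E$-graph whose vertex set is the quotient of $(\mathbb{G}[\gamma_1]\times\{1\})\cup(\mathbb{G}[\gamma_2]\times\{2\})$ obtained by identifying $(g,1)$ with $(g,2)$ for all $g\in\mathbb{G}[\gamma_1\cap\gamma_2]$, and whose $R_e$ is the image of $\bigcup_{i:e\in\gamma_i}\{((g,i),(ge,i)):g\in\mathbb{G}[\gamma_i]\}$. For $\beta\subseteq E$, the $\beta$-connected component of a vertex $x$ is the set of vertices reachable from $x$ along edges in $R_e$ with $e\in\beta$, with the induced $R_e$ for $e\in\beta$ and $R_e=\emptyset$ for $e\notin\beta$. *)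

theory Defs
  imports "HOL-Algebra.Algebra"
begin

definition E_group :: "('g, 'b) monoid_scheme \<Rightarrow> 'g set \<Rightarrow> bool" where
  "E_group G E \<longleftrightarrow> group G \<and> finite E \<and> E \<subseteq> carrier G \<and> generate G E = carrier G \<and>
     (\<forall>e\<in>E. e \<noteq> \<one>\<^bsub>G\<^esub> \<and> e \<otimes>\<^bsub>G\<^esub> e = \<one>\<^bsub>G\<^esub>)"

definition coset_cycle ::
  "('g, 'b) monoid_scheme \<Rightarrow> 'g set \<Rightarrow> nat \<Rightarrow> (nat \<Rightarrow> 'g) \<Rightarrow> (nat \<Rightarrow> 'g set) \<Rightarrow> bool" where
  "coset_cycle G \<gamma> n g \<delta> \<longleftrightarrow> n \<ge> 2 \<and>
     (\<forall>i<n. g i \<in> generate G \<gamma> \<and> \<delta> i \<subseteq> \<gamma> \<and>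
        g ((i + 1) mod n) \<in> l_coset G (g i) (generate G (\<delta> i)) \<and>
        l_coset G (g i) (generate G (\<delta> i \<inter> \<delta> ((i + n - 1) mod n))) \<inter>
        l_coset G (g ((i + 1) mod n)) (generate G (\<delta> i \<inter> \<delta> ((i + 1) mod n))) = {})"

definition two_acyclic :: "('g, 'b) monoid_scheme \<Rightarrow> 'g set \<Rightarrow> bool" where
  "two_acyclic G \<gamma> \<longleftrightarrow> \<not> (\<exists>g \<delta>. coset_cycle G \<gamma> 2 g \<delta>)"

type_synonym ('v, 'e) egraph = "'v set \<times> ('e \<Rightarrow> ('v \<times> 'v) set)"

definition is_egraph :: "'e set \<Rightarrow> ('v, 'e) egraph \<Rightarrow> bool" where
  "is_egraph E A \<longleftrightarrow> (\<forall>e\<in>E. snd A e \<subseteq> fst A \<times> fst A \<and> sym (snd A e) \<and>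
      (\<forall>x y z. (x, y) \<in> snd A e \<longrightarrow> (x, z) \<in> snd A e \<longrightarrow> y = z))"

definition egraph_iso :: "'e set \<Rightarrow> ('v, 'e) egraph \<Rightarrow> ('w, 'e) egraph \<Rightarrow> bool" where
  "egraph_iso E A B \<longleftrightarrow> (\<exists>f. bij_betw f (fst A) (fst B) \<and>
      (\<forall>e\<in>E. \<forall>x\<in>fst A. \<forall>y\<in>fst A. (x, y) \<in> snd A e \<longleftrightarrow> (f x, f y) \<in> snd B e))"

definition Cay :: "('g, 'b) monoid_scheme \<Rightarrow> 'g set \<Rightarrow> ('g, 'g) egraph" where
  "Cay G \<gamma> = (generate G \<gamma>,
     (\<lambda>e. if e \<in> \<gamma> then {(g, g \<otimes>\<^bsub>G\<^esub> e) | g. g \<in> generate G \<gamma>} else {}))"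

text \<open>Free amalgam Cay(G[g1]) + Cay(G[g2]): quotient of the disjoint union
  (G[g1] x {1}) u (G[g2] x {2}) identifying (g,1) and (g,2) for g in G[g1 n g2].\<close>
definition amalg_dom :: "('g, 'b) monoid_scheme \<Rightarrow> 'g set \<Rightarrow> 'g set \<Rightarrow> ('g \<times> nat) set" where
  "amalg_dom G \<gamma>1 \<gamma>2 = (generate G \<gamma>1 \<times> {1}) \<union> (generate G \<gamma>2 \<times> {2})"

definition amalg_rel :: "('g, 'b) monoid_scheme \<Rightarrow> 'g set \<Rightarrow> 'g set \<Rightarrow> (('g \<times> nat) \<times> ('g \<times> nat)) set" where
  "amalg_rel G \<gamma>1 \<gamma>2 = Id_on (amalg_dom G \<gamma>1 \<gamma>2) \<union>
     {((g, 1), (g, 2)) | g. g \<in> generate G (\<gamma>1 \<inter> \<gamma>2)} \<union>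
     {((g, 2), (g, 1)) | g. g \<in> generate G (\<gamma>1 \<inter> \<gamma>2)}"

definition amalgam :: "('g, 'b) monoid_scheme \<Rightarrow> 'g set \<Rightarrow> 'g set \<Rightarrow> (('g \<times> nat) set, 'g) egraph" where
  "amalgam G \<gamma>1 \<gamma>2 =
     (amalg_dom G \<gamma>1 \<gamma>2 // amalg_rel G \<gamma>1 \<gamma>2,
      (\<lambda>e. {(amalg_rel G \<gamma>1 \<gamma>2 `` {(g, i)}, amalg_rel G \<gamma>1 \<gamma>2 `` {(g \<otimes>\<^bsub>G\<^esub> e, i)}) | g i.
              (i = 1 \<and> e \<in> \<gamma>1 \<and> g \<in> generate G \<gamma>1) \<or> (i = 2 \<and> e \<in> \<gamma>2 \<and> g \<in> generate G \<gamma>2)}))"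

definition component :: "'e set \<Rightarrow> ('v, 'e) egraph \<Rightarrow> 'v \<Rightarrow> ('v, 'e) egraph" where
  "component \<beta> A x =
     (let V = (\<Union>e\<in>\<beta>. snd A e)\<^sup>* `` {x}
      in (V, (\<lambda>e. if e \<in> \<beta> then snd A e \<inter> (V \<times> V) else {})))"

end

theory Submission
  imports Defs
begin

lemma (in group) two_acyclic_int:
  assumes ta: "two_acyclic G \<alpha>" and ac: "\<alpha> \<subseteq> carrier G" and d0: "\<delta>0 \<subseteq> \<alpha>" and d1: "\<delta>1 \<subseteq> \<alpha>"
  shows "generate G \<delta>0 \<inter> generate G \<delta>1 \<subseteq> generate G (\<delta>0 \<inter> \<delta>1)"
proof
  fix h assume h: "h \<in> generate G \<delta>0 \<inter> generate G \<delta>1"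
  show "h \<in> generate G (\<delta>0 \<inter> \<delta>1)"
  proof (rule ccontr)
    assume nh: "h \<notin> generate G (\<delta>0 \<inter> \<delta>1)"
    let ?T = "generate G (\<delta>0 \<inter> \<delta>1)"
    have sT: "subgroup ?T G" using ac d0 d1 by (intro generate_is_subgroup) auto
    have c0: "\<delta>0 \<subseteq> carrier G" "\<delta>1 \<subseteq> carrier G" using ac d0 d1 by auto
    have hc: "h \<in> carrier G" using h generate_in_carrier c0 by blast
    have disj: "l_coset G \<one> ?T \<inter> l_coset G h ?T = {}"
    proof (rule ccontr)
      assume "l_coset G \<one> ?T \<inter> l_coset G h ?T \<noteq> {}"
      then obtain a b where ab: "a \<in> ?T" "b \<in> ?T" "\<one> \<otimes> a = h \<otimes> b"
        unfolding l_coset_def by blast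
      have ac': "a \<in> carrier G" "b \<in> carrier G" using ab(1,2) subgroup.mem_carrier[OF sT] by auto
      have "a = h \<otimes> b" using ab(3) ac' by simp
      then have "h = a \<otimes> inv b" using inv_solve_right[of h a b] ac' hc by blast
      moreover have "a \<otimes> inv b \<in> ?T" by (simp add: ab subgroup.m_closed[OF sT] subgroup.m_inv_closed[OF sT])
      ultimately show False using nh by simp
    qed
    have disj': "l_coset G h (generate G (\<delta>1 \<inter> \<delta>0)) \<inter> l_coset G \<one> (generate G (\<delta>1 \<inter> \<delta>0)) = {}"
      using disj by (simp add: Int_commute)
    have m0: "generate G \<delta>0 \<subseteq> generate G \<alpha>" "generate G \<delta>1 \<subseteq> generate G \<alpha>"
      using d0 d1 mono_generate by auto
    have hi: "inv h \<in> generate G \<delta>1" using h generate_m_inv_closed c0 by blast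
    have "coset_cycle G \<alpha> 2 (\<lambda>i. if i = 0 then \<one> else h) (\<lambda>i. if i = 0 then \<delta>0 else \<delta>1)"
      unfolding coset_cycle_def
    proof (intro conjI allI impI)
      fix i :: nat assume "i < 2"
      then consider "i = 0" | "i = 1" by linarith
      note cs = this
      let ?g = "(\<lambda>i::nat. if i = 0 then \<one> else h)" and ?d = "(\<lambda>i::nat. if i = 0 then \<delta>0 else \<delta>1)"
      show "?g i \<in> generate G \<alpha>" using cs h m0 generate.one by cases auto
      show "?d i \<subseteq> \<alpha>" using cs d0 d1 by cases auto
      show "?g ((i + 1) mod 2) \<in> l_coset G (?g i) (generate G (?d i))"
        using cs
      proof cases
        case 1
        have "h = \<one> \<otimes> h" using hc by simp
        then show ?thesis using 1 h unfolding l_coset_def by auto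
      next
        case 2
        have "h \<otimes> inv h = \<one>" using hc by simp
        then show ?thesis using 2 hi unfolding l_coset_def by force
      qed
      show "l_coset G (?g i) (generate G (?d i \<inter> ?d ((i + 2 - 1) mod 2))) \<inter>
        l_coset G (?g ((i + 1) mod 2)) (generate G (?d i \<inter> ?d ((i + 1) mod 2))) = {}"
        using cs disj disj' by cases auto
    qed simp
    then show False using ta unfolding two_acyclic_def by blast
  qed
qed

definition gm :: "'a set \<Rightarrow> 'a set \<Rightarrow> nat \<Rightarrow> 'a set" where
  "gm \<gamma>1 \<gamma>2 i = (if i = 1 then \<gamma>1 else \<gamma>2)"

lemma amalg_dom_iff:
  "(g, i) \<in> amalg_dom G \<gamma>1 \<gamma>2 \<longleftrightarrow> i \<in> {1,2} \<and> g \<in> generate G (gm \<gamma>1 \<gamma>2 i)"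
  unfolding amalg_dom_def gm_def by auto

lemma amalg_cls:
  assumes "(g, i) \<in> amalg_dom G \<gamma>1 \<gamma>2"
  shows "amalg_rel G \<gamma>1 \<gamma>2 `` {(g, i)} =
    {(h, j). h = g \<and> (j = i \<or> (j \<in> {1,2} \<and> g \<in> generate G (\<gamma>1 \<inter> \<gamma>2)))}"
  using assms unfolding amalg_rel_def amalg_dom_def by auto

lemma amalg_cls_eq:
  assumes "z \<in> amalg_dom G \<gamma>1 \<gamma>2" "w \<in> amalg_dom G \<gamma>1 \<gamma>2"
  shows "amalg_rel G \<gamma>1 \<gamma>2 `` {z} = amalg_rel G \<gamma>1 \<gamma>2 `` {w} \<longleftrightarrow>
    (fst z = fst w \<and> (snd z = snd w \<or> fst z \<in> generate G (\<gamma>1 \<inter> \<gamma>2)))"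
proof -
  obtain g i where z: "z = (g, i)" by force
  obtain h j where w: "w = (h, j)" by force
  have i: "i \<in> {1,2}" "j \<in> {1,2}" using assms unfolding z w amalg_dom_iff by auto
  have cz: "amalg_rel G \<gamma>1 \<gamma>2 `` {z} = {(a, b). a = g \<and> (b = i \<or> (b \<in> {1,2} \<and> g \<in> generate G (\<gamma>1 \<inter> \<gamma>2)))}"
    using amalg_cls[OF assms(1)[unfolded z]] z by simp
  have cw: "amalg_rel G \<gamma>1 \<gamma>2 `` {w} = {(a, b). a = h \<and> (b = j \<or> (b \<in> {1,2} \<and> h \<in> generate G (\<gamma>1 \<inter> \<gamma>2)))}"
    using amalg_cls[OF assms(2)[unfolded w]] w by simp
  show ?thesis
  proof
    assume eq: "amalg_rel G \<gamma>1 \<gamma>2 `` {z} = amalg_rel G \<gamma>1 \<gamma>2 `` {w}"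
    have "(g, i) \<in> amalg_rel G \<gamma>1 \<gamma>2 `` {z}" unfolding cz by simp
    then have "(g, i) \<in> amalg_rel G \<gamma>1 \<gamma>2 `` {w}" using eq by simp
    then have "g = h \<and> (i = j \<or> (i \<in> {1,2} \<and> h \<in> generate G (\<gamma>1 \<inter> \<gamma>2)))" unfolding cw by simp
    then show "fst z = fst w \<and> (snd z = snd w \<or> fst z \<in> generate G (\<gamma>1 \<inter> \<gamma>2))"
      using z w by auto
  next
    assume a: "fst z = fst w \<and> (snd z = snd w \<or> fst z \<in> generate G (\<gamma>1 \<inter> \<gamma>2))"
    then have gh: "g = h" using z w by simp
    show "amalg_rel G \<gamma>1 \<gamma>2 `` {z} = amalg_rel G \<gamma>1 \<gamma>2 `` {w}"
    proof (cases "i = j")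
      case True then show ?thesis using z w gh by simp
    next
      case False
      then have gS: "g \<in> generate G (\<gamma>1 \<inter> \<gamma>2)" using a z w by auto
      have "amalg_rel G \<gamma>1 \<gamma>2 `` {z} = {(a, b). a = g \<and> b \<in> {1,2}}"
        unfolding cz using gS i(1) by blast
      moreover have "amalg_rel G \<gamma>1 \<gamma>2 `` {w} = {(a, b). a = g \<and> b \<in> {1,2}}"
        unfolding cw using gS i(2) gh by blast
      ultimately show ?thesis by simp
    qed
  qed
qed

lemma amalg_vert:
  "fst (amalgam G \<gamma>1 \<gamma>2) = {amalg_rel G \<gamma>1 \<gamma>2 `` {(g, i)} | g i. (g, i) \<in> amalg_dom G \<gamma>1 \<gamma>2}"
  unfolding amalgam_def quotient_def by auto

lemma amalg_edge:
  fixes G :: "('a, 'b) monoid_scheme"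
  shows "(U, V) \<in> snd (amalgam G \<gamma>1 \<gamma>2) e \<longleftrightarrow>
    (\<exists>h k. (h, k) \<in> amalg_dom G \<gamma>1 \<gamma>2 \<and> e \<in> gm \<gamma>1 \<gamma>2 k \<and>
       U = amalg_rel G \<gamma>1 \<gamma>2 `` {(h, k)} \<and> V = amalg_rel G \<gamma>1 \<gamma>2 `` {(h \<otimes>\<^bsub>G\<^esub> e, k)})"
proof
  assume "(U, V) \<in> snd (amalgam G \<gamma>1 \<gamma>2) e"
  then obtain g i where uv: "U = amalg_rel G \<gamma>1 \<gamma>2 `` {(g, i)}" "V = amalg_rel G \<gamma>1 \<gamma>2 `` {(g \<otimes>\<^bsub>G\<^esub> e, i)}"
    and c: "(i = 1 \<and> e \<in> \<gamma>1 \<and> g \<in> generate G \<gamma>1) \<or> (i = 2 \<and> e \<in> \<gamma>2 \<and> g \<in> generate G \<gamma>2)"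
    unfolding amalgam_def by auto
  have "(g, i) \<in> amalg_dom G \<gamma>1 \<gamma>2 \<and> e \<in> gm \<gamma>1 \<gamma>2 i"
    using c by (auto simp: amalg_dom_iff gm_def)
  then show "\<exists>h k. (h, k) \<in> amalg_dom G \<gamma>1 \<gamma>2 \<and> e \<in> gm \<gamma>1 \<gamma>2 k \<and>
       U = amalg_rel G \<gamma>1 \<gamma>2 `` {(h, k)} \<and> V = amalg_rel G \<gamma>1 \<gamma>2 `` {(h \<otimes>\<^bsub>G\<^esub> e, k)}"
    using uv by blast
next
  assume "\<exists>h k. (h, k) \<in> amalg_dom G \<gamma>1 \<gamma>2 \<and> e \<in> gm \<gamma>1 \<gamma>2 k \<and>
       U = amalg_rel G \<gamma>1 \<gamma>2 `` {(h, k)} \<and> V = amalg_rel G \<gamma>1 \<gamma>2 `` {(h \<otimes>\<^bsub>G\<^esub> e, k)}"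
  then obtain h k where hk: "(h, k) \<in> amalg_dom G \<gamma>1 \<gamma>2" "e \<in> gm \<gamma>1 \<gamma>2 k"
    "U = amalg_rel G \<gamma>1 \<gamma>2 `` {(h, k)}" "V = amalg_rel G \<gamma>1 \<gamma>2 `` {(h \<otimes>\<^bsub>G\<^esub> e, k)}"
    by blast
  have c: "(k = 1 \<and> e \<in> \<gamma>1 \<and> h \<in> generate G \<gamma>1) \<or> (k = 2 \<and> e \<in> \<gamma>2 \<and> h \<in> generate G \<gamma>2)"
    using hk(1,2) by (auto simp: amalg_dom_iff gm_def)
  show "(U, V) \<in> snd (amalgam G \<gamma>1 \<gamma>2) e"
    unfolding amalgam_def snd_conv
    by (rule CollectI, rule exI[of _ h], rule exI[of _ k]) (use hk(3,4) c in simp)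
qed

lemma amalg_edgeI:
  fixes G :: "('a, 'b) monoid_scheme"
  assumes "(h, k) \<in> amalg_dom G \<gamma>1 \<gamma>2" "e \<in> gm \<gamma>1 \<gamma>2 k"
  shows "(amalg_rel G \<gamma>1 \<gamma>2 `` {(h, k)}, amalg_rel G \<gamma>1 \<gamma>2 `` {(h \<otimes>\<^bsub>G\<^esub> e, k)}) \<in> snd (amalgam G \<gamma>1 \<gamma>2) e"
  unfolding amalg_edge using assms by blast

locale amsetup = group G for G :: "('a, 'b) monoid_scheme" (structure) +
  fixes \<alpha>1 \<alpha>2 \<beta> :: "'a set"
  assumes a1c: "\<alpha>1 \<subseteq> carrier G" and a2c: "\<alpha>2 \<subseteq> carrier G"
    and invol: "\<And>e. e \<in> \<alpha>1 \<union> \<alpha>2 \<Longrightarrow> e \<otimes> e = \<one>"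
    and ac1: "two_acyclic G \<alpha>1" and ac2: "two_acyclic G \<alpha>2"
begin

abbreviation "al \<equiv> gm \<alpha>1 \<alpha>2"
abbreviation "R \<equiv> amalg_rel G \<alpha>1 \<alpha>2"
abbreviation "R' \<equiv> amalg_rel G (\<beta> \<inter> \<alpha>1) (\<beta> \<inter> \<alpha>2)"
abbreviation "D \<equiv> amalg_dom G \<alpha>1 \<alpha>2"
abbreviation "D' \<equiv> amalg_dom G (\<beta> \<inter> \<alpha>1) (\<beta> \<inter> \<alpha>2)"
abbreviation "A \<equiv> amalgam G \<alpha>1 \<alpha>2"
abbreviation "T \<equiv> amalgam G (\<beta> \<inter> \<alpha>1) (\<beta> \<inter> \<alpha>2)"
abbreviation "K \<equiv> generate G (\<alpha>1 \<inter> \<alpha>2)"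
abbreviation "K' \<equiv> generate G (\<beta> \<inter> \<alpha>1 \<inter> \<alpha>2)"
abbreviation "stp \<equiv> (\<Union>e\<in>\<beta>. snd A e)"

lemma alc: "al i \<subseteq> carrier G"
  using a1c a2c by (simp add: gm_def)

lemma bl: "gm (\<beta> \<inter> \<alpha>1) (\<beta> \<inter> \<alpha>2) i = \<beta> \<inter> al i"
  by (simp add: gm_def)

lemma blint: "generate G ((\<beta> \<inter> \<alpha>1) \<inter> (\<beta> \<inter> \<alpha>2)) = K'"
  by (simp add: Int_ac)

lemma gen_car: "a \<in> generate G (al i) \<Longrightarrow> a \<in> carrier G"
  using generate_in_carrier alc by blast

lemma gen_car': "a \<in> generate G (\<beta> \<inter> al i) \<Longrightarrow> a \<in> carrier G"
  using generate_in_carrier alc by blast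

lemma sub_al: "subgroup (generate G (al i)) G"
  using generate_is_subgroup alc by blast

lemma sub_bl: "subgroup (generate G (\<beta> \<inter> al i)) G"
  using generate_is_subgroup alc by blast

lemma sub_K: "subgroup K G"
  using generate_is_subgroup a1c by blast

lemma bl_al: "generate G (\<beta> \<inter> al i) \<subseteq> generate G (al i)"
  by (rule mono_generate) auto

lemma K_al: "i \<in> {1,2} \<Longrightarrow> K \<subseteq> generate G (al i)"
  by (rule mono_generate) (auto simp: gm_def)

lemma K'_bl: "i \<in> {1,2} \<Longrightarrow> K' \<subseteq> generate G (\<beta> \<inter> al i)"
  by (rule mono_generate) (auto simp: gm_def)

lemma K'_K: "K' \<subseteq> K"
  by (rule mono_generate) auto

lemma acyc:
  assumes i: "i \<in> {1,2}" and a: "a \<in> generate G (\<beta> \<inter> al i)" and aK: "a \<in> K"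
  shows "a \<in> K'"
proof -
  have ta: "two_acyclic G (al i)" using ac1 ac2 by (simp add: gm_def)
  have "generate G (\<beta> \<inter> al i) \<inter> K \<subseteq> generate G ((\<beta> \<inter> al i) \<inter> (\<alpha>1 \<inter> \<alpha>2))"
    using two_acyclic_int[OF ta alc] i by (auto simp: gm_def)
  moreover have "(\<beta> \<inter> al i) \<inter> (\<alpha>1 \<inter> \<alpha>2) = \<beta> \<inter> \<alpha>1 \<inter> \<alpha>2" using i by (auto simp: gm_def)
  ultimately show ?thesis using a aK by auto
qed

lemma reach:
  assumes i: "i \<in> {1,2}" and a: "a \<in> generate G (\<beta> \<inter> al i)"
  shows "g \<in> generate G (al i) \<Longrightarrow> (R `` {(g, i)}, R `` {(g \<otimes> a, i)}) \<in> stp\<^sup>*"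
  using a
proof (induction arbitrary: g)
  case one
  then show ?case using gen_car by simp
next
  case (incl e)
  have "(R `` {(g, i)}, R `` {(g \<otimes> e, i)}) \<in> snd A e"
  proof (rule amalg_edgeI)
    show "(g, i) \<in> D" using incl i by (simp add: amalg_dom_iff)
    show "e \<in> al i" using incl by simp
  qed
  then show ?case using incl by blast
next
  case (inv e)
  have ec: "e \<in> carrier G" using inv alc by blast
  have "e \<otimes> e = \<one>" using invol inv i by (auto simp: gm_def)
  then have ie: "inv e = e" using inv_equality ec by blast
  have "(R `` {(g, i)}, R `` {(g \<otimes> e, i)}) \<in> snd A e"
  proof (rule amalg_edgeI)
    show "(g, i) \<in> D" using inv i by (simp add: amalg_dom_iff)
    show "e \<in> al i" using inv by simp
  qed
  then show ?case using inv ie by auto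
next
  case (eng a1 a2)
  have a1': "a1 \<in> generate G (al i)" using eng.hyps(1) bl_al by blast
  have g1: "g \<otimes> a1 \<in> generate G (al i)"
    using subgroup.m_closed[OF sub_al eng.prems a1'] .
  have as: "g \<otimes> a1 \<otimes> a2 = g \<otimes> (a1 \<otimes> a2)"
    using m_assoc[OF gen_car[OF eng.prems] gen_car'[OF eng.hyps(1)] gen_car'[OF eng.hyps(2)]] .
  show ?case using rtrancl_trans[OF eng.IH(1)[OF eng.prems] eng.IH(2)[OF g1]] as by simp
qed


lemma lcanc: "x \<in> carrier G \<Longrightarrow> a \<in> carrier G \<Longrightarrow> b \<in> carrier G \<Longrightarrow> x \<otimes> a = x \<otimes> b \<longleftrightarrow> a = b"
  using Units_l_cancel[of x a b] Units_eq by simp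

lemma invc: "x \<in> carrier G \<Longrightarrow> a \<in> carrier G \<Longrightarrow> inv x \<otimes> (x \<otimes> a) = a"
  by (simp add: m_assoc[symmetric])

lemma K_car: "p \<in> K \<Longrightarrow> p \<in> carrier G"
  using generate_in_carrier[of "\<alpha>1 \<inter> \<alpha>2" p] a1c by blast

lemma D_iff: "(g, i) \<in> D \<longleftrightarrow> i \<in> {1,2} \<and> g \<in> generate G (al i)"
  by (rule amalg_dom_iff)

lemma D'_iff: "(a, i) \<in> D' \<longleftrightarrow> i \<in> {1,2} \<and> a \<in> generate G (\<beta> \<inter> al i)"
  by (simp add: amalg_dom_iff bl)

lemma keyeq:
  assumes p: "p \<in> K" and i: "i \<in> {1,2}" and a: "a \<in> generate G (\<beta> \<inter> al i)"
  shows "p \<otimes> a \<in> K \<longleftrightarrow> a \<in> K'"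
proof
  have pc: "p \<in> carrier G" using K_car p .
  have ac: "a \<in> carrier G" using gen_car' a .
  assume "p \<otimes> a \<in> K"
  then have "inv p \<otimes> (p \<otimes> a) \<in> K"
    using subgroup.m_closed[OF sub_K subgroup.m_inv_closed[OF sub_K p]] by blast
  then have "a \<in> K" using invc[OF pc ac] by simp
  then show "a \<in> K'" using acyc i a by blast
next
  assume "a \<in> K'" then have "a \<in> K" using K'_K by blast
  then show "p \<otimes> a \<in> K" using subgroup.m_closed[OF sub_K p] by blast
qed

lemma pa_al:
  assumes p: "p \<in> K" and i: "i \<in> {1,2}" and a: "a \<in> generate G (\<beta> \<inter> al i)"
  shows "p \<otimes> a \<in> generate G (al i)"
proof -
  have "p \<in> generate G (al i)" using K_al[OF i] p by blast
  moreover have "a \<in> generate G (al i)" using bl_al a by blast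
  ultimately show ?thesis using subgroup.m_closed[OF sub_al] by blast
qed

lemma transfer:
  assumes p: "p \<in> K" and i: "i \<in> {1,2}" and j: "j \<in> {1,2}"
    and a: "a \<in> generate G (\<beta> \<inter> al i)" and b: "b \<in> generate G (\<beta> \<inter> al j)"
  shows "R `` {(p \<otimes> a, i)} = R `` {(p \<otimes> b, j)} \<longleftrightarrow> R' `` {(a, i)} = R' `` {(b, j)}"
proof -
  have d1: "(p \<otimes> a, i) \<in> D" using pa_al[OF p i a] i D_iff by blast
  have d2: "(p \<otimes> b, j) \<in> D" using pa_al[OF p j b] j D_iff by blast
  have d1': "(a, i) \<in> D'" using a i D'_iff by blast
  have d2': "(b, j) \<in> D'" using b j D'_iff by blast
  have pc: "p \<in> carrier G" using K_car p .
  have ac: "a \<in> carrier G" using gen_car' a .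
  have bc: "b \<in> carrier G" using gen_car' b .
  have "R `` {(p \<otimes> a, i)} = R `` {(p \<otimes> b, j)} \<longleftrightarrow> (p \<otimes> a = p \<otimes> b \<and> (i = j \<or> p \<otimes> a \<in> K))"
    using amalg_cls_eq[OF d1 d2] by simp
  also have "\<dots> \<longleftrightarrow> (a = b \<and> (i = j \<or> a \<in> K'))"
    using lcanc[OF pc ac bc] keyeq[OF p i a] by simp
  also have "\<dots> \<longleftrightarrow> R' `` {(a, i)} = R' `` {(b, j)}"
    using amalg_cls_eq[OF d1' d2'] blint by simp
  finally show ?thesis .
qed

definition F :: "'a \<Rightarrow> ('a \<times> nat) set \<Rightarrow> ('a \<times> nat) set" where
  "F p U = (\<lambda>(h, k). (inv p \<otimes> h, k)) ` U"

lemma Fval: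
  assumes p: "p \<in> K" and i: "i \<in> {1,2}" and a: "a \<in> generate G (\<beta> \<inter> al i)"
  shows "F p (R `` {(p \<otimes> a, i)}) = R' `` {(a, i)}"
proof -
  have d: "(p \<otimes> a, i) \<in> D" using pa_al[OF p i a] i D_iff by blast
  have d': "(a, i) \<in> D'" using a i D'_iff by blast
  have c1: "R `` {(p \<otimes> a, i)} = (\<lambda>j. (p \<otimes> a, j)) ` {j. j = i \<or> (j \<in> {1,2} \<and> a \<in> K')}"
    using amalg_cls[OF d] keyeq[OF p i a] by auto
  have c2: "R' `` {(a, i)} = (\<lambda>j. (a, j)) ` {j. j = i \<or> (j \<in> {1,2} \<and> a \<in> K')}"
    using amalg_cls[OF d'] blint by auto
  have ip: "inv p \<otimes> (p \<otimes> a) = a" using invc K_car[OF p] gen_car'[OF a] by blast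
  show ?thesis unfolding F_def c1 c2 image_image using ip by simp
qed

definition Wg :: "'a \<Rightarrow> ('a \<times> nat) set set" where
  "Wg p = {R `` {(p \<otimes> a, i)} | a i. i \<in> {1,2} \<and> a \<in> generate G (\<beta> \<inter> al i)}"

lemma edge_cases:
  assumes "(U, V) \<in> snd A e"
  obtains h k where "(h, k) \<in> D" "k \<in> {1,2}" "h \<in> generate G (al k)" "e \<in> al k"
    "U = R `` {(h, k)}" "V = R `` {(h \<otimes> e, k)}"
  using assms[unfolded amalg_edge] D_iff by blast

lemma glue_step:
  assumes p: "p \<in> K" and i: "i \<in> {1,2}" and a: "a \<in> generate G (\<beta> \<inter> al i)"
    and e: "e \<in> \<beta>" and UV: "(R `` {(p \<otimes> a, i)}, V) \<in> snd A e"
  obtains k where "k \<in> {1,2}" "a \<in> generate G (\<beta> \<inter> al k)" "e \<in> \<beta> \<inter> al k"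
    "R `` {(p \<otimes> a, i)} = R `` {(p \<otimes> a, k)}" "V = R `` {(p \<otimes> (a \<otimes> e), k)}"
proof -
  obtain h k where hk: "(h, k) \<in> D" "k \<in> {1,2}" "h \<in> generate G (al k)" "e \<in> al k"
    "R `` {(p \<otimes> a, i)} = R `` {(h, k)}" "V = R `` {(h \<otimes> e, k)}"
    using edge_cases[OF UV] by blast
  have d: "(p \<otimes> a, i) \<in> D" using pa_al[OF p i a] i D_iff by blast
  have "h = p \<otimes> a \<and> (k = i \<or> h \<in> K)" using amalg_cls_eq[OF hk(1) d] hk(5) by auto
  then have hpa: "h = p \<otimes> a" and ki: "k = i \<or> p \<otimes> a \<in> K" by auto
  have ak: "a \<in> generate G (\<beta> \<inter> al k)"
  proof (cases "k = i")
    case True then show ?thesis using a by simp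
  next
    case False then have "p \<otimes> a \<in> K" using ki by simp
    then have "a \<in> K'" using keyeq[OF p i a] by blast
    then show ?thesis using K'_bl[OF hk(2)] by blast
  qed
  have ek: "e \<in> \<beta> \<inter> al k" using e hk(4) by simp
  have ec: "e \<in> carrier G" using hk(4) alc by blast
  have "h \<otimes> e = p \<otimes> (a \<otimes> e)" using hpa m_assoc K_car[OF p] gen_car'[OF a] ec by simp
  then have "V = R `` {(p \<otimes> (a \<otimes> e), k)}" using hk(6) by simp
  moreover have "R `` {(p \<otimes> a, i)} = R `` {(p \<otimes> a, k)}" using hk(5) hpa by simp
  ultimately show ?thesis using that hk(2) ak ek by blast
qed

lemma bl_closed:
  assumes "a \<in> generate G (\<beta> \<inter> al k)" "e \<in> \<beta> \<inter> al k"
  shows "a \<otimes> e \<in> generate G (\<beta> \<inter> al k)"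
  using subgroup.m_closed[OF sub_bl assms(1) generate.incl[OF assms(2)]] .

lemma glue_closed:
  assumes p: "p \<in> K" and U: "U \<in> Wg p" and e: "e \<in> \<beta>" and UV: "(U, V) \<in> snd A e"
  shows "V \<in> Wg p"
proof -
  obtain a i where ai: "U = R `` {(p \<otimes> a, i)}" "i \<in> {1,2}" "a \<in> generate G (\<beta> \<inter> al i)"
    using U unfolding Wg_def by blast
  obtain k where k: "k \<in> {1,2}" "a \<in> generate G (\<beta> \<inter> al k)" "e \<in> \<beta> \<inter> al k"
    "V = R `` {(p \<otimes> (a \<otimes> e), k)}"
    using glue_step[OF p ai(2) ai(3) e] UV ai(1) by metis
  have "a \<otimes> e \<in> generate G (\<beta> \<inter> al k)" using bl_closed k by blast
  then show ?thesis unfolding Wg_def using k by blast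
qed

lemma glue_comp:
  assumes p: "p \<in> K" and i0: "i0 \<in> {1,2}" and g0: "g0 \<in> generate G (al i0)"
    and a0: "a0 \<in> generate G (\<beta> \<inter> al i0)" and eq: "g0 \<otimes> a0 = p"
  shows "stp\<^sup>* `` {R `` {(g0, i0)}} = Wg p"
proof
  have ia0: "inv a0 \<in> generate G (\<beta> \<inter> al i0)" using subgroup.m_inv_closed[OF sub_bl a0] .
  have "g0 = p \<otimes> inv a0" using inv_solve_right[of g0 p a0] eq gen_car[OF g0] gen_car'[OF a0] K_car[OF p]
    by simp
  then have x: "R `` {(g0, i0)} \<in> Wg p" unfolding Wg_def using i0 ia0 by blast
  show "stp\<^sup>* `` {R `` {(g0, i0)}} \<subseteq> Wg p"
  proof
    fix V assume "V \<in> stp\<^sup>* `` {R `` {(g0, i0)}}"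
    then have "(R `` {(g0, i0)}, V) \<in> stp\<^sup>*" by simp
    then show "V \<in> Wg p"
    proof (induction rule: rtrancl_induct)
      case base then show ?case using x .
    next
      case (step U V)
      then obtain e where "e \<in> \<beta>" "(U, V) \<in> snd A e" by blast
      then show ?case using glue_closed[OF p step.IH] by blast
    qed
  qed
  show "Wg p \<subseteq> stp\<^sup>* `` {R `` {(g0, i0)}}"
  proof
    fix V assume "V \<in> Wg p"
    then obtain b j where bj: "V = R `` {(p \<otimes> b, j)}" "j \<in> {1,2}" "b \<in> generate G (\<beta> \<inter> al j)"
      unfolding Wg_def by blast
    have 1: "(R `` {(g0, i0)}, R `` {(p, i0)}) \<in> stp\<^sup>*" using reach[OF i0 a0 g0] eq by simp
    have pi: "(p, i0) \<in> D" using i0 K_al[OF i0] p D_iff by blast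
    have pj: "(p, j) \<in> D" using bj(2) K_al[OF bj(2)] p D_iff by blast
    have 2: "R `` {(p, i0)} = R `` {(p, j)}" using amalg_cls_eq[OF pi pj] p by simp
    have 3: "(R `` {(p, j)}, V) \<in> stp\<^sup>*" using reach[OF bj(2) bj(3)] K_al[OF bj(2)] p bj(1) by blast
    show "V \<in> stp\<^sup>* `` {R `` {(g0, i0)}}" using rtrancl_trans[OF 1 3[folded 2]] by simp
  qed
qed

lemma glue_iso:
  assumes p: "p \<in> K"
  shows "egraph_iso E' (Wg p, \<lambda>e. if e \<in> \<beta> then snd A e \<inter> (Wg p \<times> Wg p) else {}) T"
  unfolding egraph_iso_def fst_conv snd_conv
proof (intro exI conjI)
  show "bij_betw (F p) (Wg p) (fst T)"
    unfolding bij_betw_def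
  proof
    show "inj_on (F p) (Wg p)"
    proof (rule inj_onI)
      fix U V assume U: "U \<in> Wg p" and V: "V \<in> Wg p" and eq: "F p U = F p V"
      obtain a i where ai: "U = R `` {(p \<otimes> a, i)}" "i \<in> {1,2}" "a \<in> generate G (\<beta> \<inter> al i)"
        using U unfolding Wg_def by blast
      obtain b j where bj: "V = R `` {(p \<otimes> b, j)}" "j \<in> {1,2}" "b \<in> generate G (\<beta> \<inter> al j)"
        using V unfolding Wg_def by blast
      have "R' `` {(a, i)} = R' `` {(b, j)}"
        using eq Fval[OF p ai(2,3)] Fval[OF p bj(2,3)] ai(1) bj(1) by simp
      then show "U = V" using transfer[OF p ai(2) bj(2) ai(3) bj(3)] ai(1) bj(1) by simp
    qed
    show "F p ` Wg p = fst T"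
      unfolding amalg_vert
    proof
      show "F p ` Wg p \<subseteq> {R' `` {(g, i)} |g i. (g, i) \<in> D'}"
      proof
        fix Y assume "Y \<in> F p ` Wg p"
        then obtain a i where ai: "Y = F p (R `` {(p \<otimes> a, i)})" "i \<in> {1,2}" "a \<in> generate G (\<beta> \<inter> al i)"
          unfolding Wg_def by blast
        then have "Y = R' `` {(a, i)}" "(a, i) \<in> D'" using Fval[OF p ai(2,3)] D'_iff by auto
        then show "Y \<in> {R' `` {(g, i)} |g i. (g, i) \<in> D'}" by blast
      qed
      show "{R' `` {(g, i)} |g i. (g, i) \<in> D'} \<subseteq> F p ` Wg p"
      proof
        fix Y assume "Y \<in> {R' `` {(g, i)} |g i. (g, i) \<in> D'}"
        then obtain a i where ai: "Y = R' `` {(a, i)}" "(a, i) \<in> D'" by blast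
        then have ai': "i \<in> {1,2}" "a \<in> generate G (\<beta> \<inter> al i)" using D'_iff by auto
        have "R `` {(p \<otimes> a, i)} \<in> Wg p" unfolding Wg_def using ai' by blast
        moreover have "Y = F p (R `` {(p \<otimes> a, i)})" using Fval[OF p ai'] ai(1) by simp
        ultimately show "Y \<in> F p ` Wg p" by blast
      qed
    qed
  qed
  show "\<forall>e\<in>E'. \<forall>U\<in>Wg p. \<forall>V\<in>Wg p. ((U, V) \<in> (if e \<in> \<beta> then snd A e \<inter> (Wg p \<times> Wg p) else {}))
     = ((F p U, F p V) \<in> snd T e)"
  proof (intro ballI)
    fix e U V assume U: "U \<in> Wg p" and V: "V \<in> Wg p"
    obtain a i where ai: "U = R `` {(p \<otimes> a, i)}" "i \<in> {1,2}" "a \<in> generate G (\<beta> \<inter> al i)"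
      using U unfolding Wg_def by blast
    obtain b j where bj: "V = R `` {(p \<otimes> b, j)}" "j \<in> {1,2}" "b \<in> generate G (\<beta> \<inter> al j)"
      using V unfolding Wg_def by blast
    have FU: "F p U = R' `` {(a, i)}" using Fval[OF p ai(2,3)] ai(1) by simp
    have FV: "F p V = R' `` {(b, j)}" using Fval[OF p bj(2,3)] bj(1) by simp
    show "((U, V) \<in> (if e \<in> \<beta> then snd A e \<inter> (Wg p \<times> Wg p) else {})) = ((F p U, F p V) \<in> snd T e)"
    proof
      assume "(U, V) \<in> (if e \<in> \<beta> then snd A e \<inter> (Wg p \<times> Wg p) else {})"
      then have e: "e \<in> \<beta>" and UV: "(U, V) \<in> snd A e" by (auto split: if_splits)
      obtain k where k: "k \<in> {1,2}" "a \<in> generate G (\<beta> \<inter> al k)" "e \<in> \<beta> \<inter> al k"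
        "R `` {(p \<otimes> a, i)} = R `` {(p \<otimes> a, k)}" "V = R `` {(p \<otimes> (a \<otimes> e), k)}"
        using glue_step[OF p ai(2) ai(3) e] UV ai(1) by metis
      have ae: "a \<otimes> e \<in> generate G (\<beta> \<inter> al k)" using bl_closed k by blast
      have t1: "R' `` {(a, i)} = R' `` {(a, k)}" using transfer[OF p ai(2) k(1) ai(3) k(2)] k(4) by simp
      have t2: "R' `` {(b, j)} = R' `` {(a \<otimes> e, k)}"
        using transfer[OF p bj(2) k(1) bj(3) ae] k(5) bj(1) by simp
      have ak': "(a, k) \<in> D'" using k D'_iff by blast
      have "(R' `` {(a, k)}, R' `` {(a \<otimes> e, k)}) \<in> snd T e"
        by (rule amalg_edgeI[OF ak']) (use k(3) in \<open>simp add: bl\<close>)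
      then show "(F p U, F p V) \<in> snd T e" using FU FV t1 t2 by simp
    next
      assume "(F p U, F p V) \<in> snd T e"
      then obtain c k where ck: "(c, k) \<in> D'" "e \<in> gm (\<beta> \<inter> \<alpha>1) (\<beta> \<inter> \<alpha>2) k"
        "F p U = R' `` {(c, k)}" "F p V = R' `` {(c \<otimes> e, k)}"
        unfolding amalg_edge by blast
      have k: "k \<in> {1,2}" "c \<in> generate G (\<beta> \<inter> al k)" using ck(1) D'_iff by auto
      have ek: "e \<in> \<beta> \<inter> al k" using ck(2) bl by simp
      have ce: "c \<otimes> e \<in> generate G (\<beta> \<inter> al k)" using bl_closed k ek by blast
      have u: "U = R `` {(p \<otimes> c, k)}" using transfer[OF p ai(2) k(1) ai(3) k(2)] FU ck(3) ai(1) by simp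
      have v: "V = R `` {(p \<otimes> (c \<otimes> e), k)}" using transfer[OF p bj(2) k(1) bj(3) ce] FV ck(4) bj(1) by simp
      have ec: "e \<in> carrier G" using ek alc by blast
      have as: "p \<otimes> (c \<otimes> e) = p \<otimes> c \<otimes> e" using m_assoc K_car[OF p] gen_car'[OF k(2)] ec by simp
      have pcD: "(p \<otimes> c, k) \<in> D" using pa_al[OF p k(1) k(2)] k(1) D_iff by blast
      have "(R `` {(p \<otimes> c, k)}, R `` {(p \<otimes> c \<otimes> e, k)}) \<in> snd A e"
        by (rule amalg_edgeI[OF pcD]) (use ek in simp)
      then show "(U, V) \<in> (if e \<in> \<beta> then snd A e \<inter> (Wg p \<times> Wg p) else {})"
        using u v as U V ek by simp
    qed
  qed
qed


definition Wn :: "'a \<Rightarrow> nat \<Rightarrow> ('a \<times> nat) set set" where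
  "Wn g i = {R `` {(g \<otimes> a, i)} | a. a \<in> generate G (\<beta> \<inter> al i)}"

definition Fn :: "'a \<Rightarrow> ('a \<times> nat) set \<Rightarrow> 'a" where
  "Fn g U = inv g \<otimes> fst (the_elem U)"

context
  fixes g i
  assumes i: "i \<in> {1,2}" and g: "g \<in> generate G (al i)"
    and ng: "\<And>a. a \<in> generate G (\<beta> \<inter> al i) \<Longrightarrow> g \<otimes> a \<notin> K"
begin

lemma ga_al: "a \<in> generate G (\<beta> \<inter> al i) \<Longrightarrow> g \<otimes> a \<in> generate G (al i)"
  using subgroup.m_closed[OF sub_al g] bl_al by blast

lemma ng_D: "a \<in> generate G (\<beta> \<inter> al i) \<Longrightarrow> (g \<otimes> a, i) \<in> D"
  using ga_al i D_iff by blast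

lemma ng_cls: "a \<in> generate G (\<beta> \<inter> al i) \<Longrightarrow> R `` {(g \<otimes> a, i)} = {(g \<otimes> a, i)}"
  using amalg_cls[OF ng_D] ng by auto

lemma ng_eq:
  assumes a: "a \<in> generate G (\<beta> \<inter> al i)" and hk: "(h, k) \<in> D" and eq: "R `` {(h, k)} = R `` {(g \<otimes> a, i)}"
  shows "h = g \<otimes> a \<and> k = i"
  using amalg_cls_eq[OF hk ng_D[OF a]] eq ng[OF a] by auto

lemma Fn_val: "a \<in> generate G (\<beta> \<inter> al i) \<Longrightarrow> Fn g (R `` {(g \<otimes> a, i)}) = a"
  unfolding Fn_def using ng_cls invc gen_car[OF g] gen_car' by simp

lemma ng_step:
  assumes a: "a \<in> generate G (\<beta> \<inter> al i)" and e: "e \<in> \<beta>"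
    and UV: "(R `` {(g \<otimes> a, i)}, V) \<in> snd A e"
  shows "e \<in> \<beta> \<inter> al i \<and> V = R `` {(g \<otimes> (a \<otimes> e), i)}"
proof -
  obtain h k where hk: "(h, k) \<in> D" "k \<in> {1,2}" "h \<in> generate G (al k)" "e \<in> al k"
    "R `` {(g \<otimes> a, i)} = R `` {(h, k)}" "V = R `` {(h \<otimes> e, k)}"
    using edge_cases[OF UV] by blast
  have "h = g \<otimes> a \<and> k = i" using ng_eq[OF a hk(1)] hk(5) by simp
  moreover have "e \<in> carrier G" using hk(4) alc by blast
  ultimately show ?thesis using hk e m_assoc gen_car[OF g] gen_car'[OF a] by simp
qed

lemma ng_comp: "stp\<^sup>* `` {R `` {(g, i)}} = Wn g i"
proof
  have x: "R `` {(g, i)} \<in> Wn g i"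
  proof -
    have "R `` {(g \<otimes> \<one>, i)} \<in> Wn g i" unfolding Wn_def using generate.one by blast
    then show ?thesis using gen_car[OF g] by simp
  qed
  show "stp\<^sup>* `` {R `` {(g, i)}} \<subseteq> Wn g i"
  proof
    fix V assume "V \<in> stp\<^sup>* `` {R `` {(g, i)}}"
    then have "(R `` {(g, i)}, V) \<in> stp\<^sup>*" by simp
    then show "V \<in> Wn g i"
    proof (induction rule: rtrancl_induct)
      case base then show ?case using x .
    next
      case (step U V)
      then obtain e where e: "e \<in> \<beta>" "(U, V) \<in> snd A e" by blast
      obtain a where a: "U = R `` {(g \<otimes> a, i)}" "a \<in> generate G (\<beta> \<inter> al i)"
        using step.IH unfolding Wn_def by blast
      have "e \<in> \<beta> \<inter> al i \<and> V = R `` {(g \<otimes> (a \<otimes> e), i)}" using ng_step[OF a(2) e(1)] e(2) a(1) by simp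
      moreover then have "a \<otimes> e \<in> generate G (\<beta> \<inter> al i)" using bl_closed a(2) by blast
      ultimately show ?case unfolding Wn_def by blast
    qed
  qed
  show "Wn g i \<subseteq> stp\<^sup>* `` {R `` {(g, i)}}"
  proof
    fix V assume "V \<in> Wn g i"
    then obtain a where "V = R `` {(g \<otimes> a, i)}" "a \<in> generate G (\<beta> \<inter> al i)"
      unfolding Wn_def by blast
    then show "V \<in> stp\<^sup>* `` {R `` {(g, i)}}" using reach[OF i _ g] by blast
  qed
qed

lemma ng_iso:
  "egraph_iso E' (Wn g i, \<lambda>e. if e \<in> \<beta> then snd A e \<inter> (Wn g i \<times> Wn g i) else {}) (Cay G (\<beta> \<inter> al i))"
  unfolding egraph_iso_def fst_conv snd_conv
proof (intro exI conjI)
  show "bij_betw (Fn g) (Wn g i) (fst (Cay G (\<beta> \<inter> al i)))"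
    unfolding bij_betw_def Cay_def fst_conv
  proof
    show "inj_on (Fn g) (Wn g i)"
    proof (rule inj_onI)
      fix U V assume U: "U \<in> Wn g i" and V: "V \<in> Wn g i" and eq: "Fn g U = Fn g V"
      obtain a where a: "U = R `` {(g \<otimes> a, i)}" "a \<in> generate G (\<beta> \<inter> al i)"
        using U unfolding Wn_def by blast
      obtain b where b: "V = R `` {(g \<otimes> b, i)}" "b \<in> generate G (\<beta> \<inter> al i)"
        using V unfolding Wn_def by blast
      show "U = V" using eq Fn_val[OF a(2)] Fn_val[OF b(2)] a b by simp
    qed
    show "Fn g ` Wn g i = generate G (\<beta> \<inter> al i)"
    proof
      show "Fn g ` Wn g i \<subseteq> generate G (\<beta> \<inter> al i)"
        unfolding Wn_def using Fn_val by auto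
      show "generate G (\<beta> \<inter> al i) \<subseteq> Fn g ` Wn g i"
      proof
        fix a assume a: "a \<in> generate G (\<beta> \<inter> al i)"
        have "R `` {(g \<otimes> a, i)} \<in> Wn g i" unfolding Wn_def using a by blast
        then show "a \<in> Fn g ` Wn g i" using Fn_val[OF a] by force
      qed
    qed
  qed
  show "\<forall>e\<in>E'. \<forall>U\<in>Wn g i. \<forall>V\<in>Wn g i. ((U, V) \<in> (if e \<in> \<beta> then snd A e \<inter> (Wn g i \<times> Wn g i) else {}))
     = ((Fn g U, Fn g V) \<in> snd (Cay G (\<beta> \<inter> al i)) e)"
  proof (intro ballI)
    fix e U V assume U: "U \<in> Wn g i" and V: "V \<in> Wn g i"
    obtain a where a: "U = R `` {(g \<otimes> a, i)}" "a \<in> generate G (\<beta> \<inter> al i)"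
      using U unfolding Wn_def by blast
    obtain b where b: "V = R `` {(g \<otimes> b, i)}" "b \<in> generate G (\<beta> \<inter> al i)"
      using V unfolding Wn_def by blast
    have ac: "a \<in> carrier G" using gen_car' a(2) .
    have bc: "b \<in> carrier G" using gen_car' b(2) .
    have gc: "g \<in> carrier G" using gen_car g .
    have cay: "(a, b) \<in> snd (Cay G (\<beta> \<inter> al i)) e \<longleftrightarrow> e \<in> \<beta> \<inter> al i \<and> b = a \<otimes> e"
      unfolding Cay_def snd_conv using a(2) by auto
    show "((U, V) \<in> (if e \<in> \<beta> then snd A e \<inter> (Wn g i \<times> Wn g i) else {})) =
      ((Fn g U, Fn g V) \<in> snd (Cay G (\<beta> \<inter> al i)) e)"
      unfolding a(1) b(1) Fn_val[OF a(2)] Fn_val[OF b(2)] cay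
    proof
      assume "(R `` {(g \<otimes> a, i)}, R `` {(g \<otimes> b, i)}) \<in> (if e \<in> \<beta> then snd A e \<inter> (Wn g i \<times> Wn g i) else {})"
      then have e: "e \<in> \<beta>" and UV: "(R `` {(g \<otimes> a, i)}, R `` {(g \<otimes> b, i)}) \<in> snd A e"
        by (auto split: if_splits)
      have st: "e \<in> \<beta> \<inter> al i \<and> R `` {(g \<otimes> b, i)} = R `` {(g \<otimes> (a \<otimes> e), i)}"
        using ng_step[OF a(2) e UV] .
      then have ae: "a \<otimes> e \<in> generate G (\<beta> \<inter> al i)" using bl_closed a(2) by blast
      have ec: "a \<otimes> e \<in> carrier G" using gen_car' ae .
      have "g \<otimes> b = g \<otimes> (a \<otimes> e)" using st ng_cls[OF b(2)] ng_cls[OF ae] by simp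
      then have "b = a \<otimes> e" using lcanc[OF gc bc ec] by simp
      then show "e \<in> \<beta> \<inter> al i \<and> b = a \<otimes> e" using st by simp
    next
      assume h: "e \<in> \<beta> \<inter> al i \<and> b = a \<otimes> e"
      have ec: "e \<in> carrier G" using h alc by blast
      have "(R `` {(g \<otimes> a, i)}, R `` {(g \<otimes> a \<otimes> e, i)}) \<in> snd A e"
        by (rule amalg_edgeI[OF ng_D[OF a(2)]]) (use h in simp)
      moreover have "g \<otimes> a \<otimes> e = g \<otimes> b" using h m_assoc gc ac ec by simp
      ultimately show "(R `` {(g \<otimes> a, i)}, R `` {(g \<otimes> b, i)}) \<in> (if e \<in> \<beta> then snd A e \<inter> (Wn g i \<times> Wn g i) else {})"
        using U V a(1) b(1) h by simp
    qed
  qed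
qed

end

lemma main_loc:
  assumes x: "x \<in> fst A"
  shows "egraph_iso E' (component \<beta> A x) (Cay G (\<beta> \<inter> \<alpha>1)) \<or>
         egraph_iso E' (component \<beta> A x) (Cay G (\<beta> \<inter> \<alpha>2)) \<or>
         egraph_iso E' (component \<beta> A x) T"
proof -
  obtain g0 i0 where x0: "x = R `` {(g0, i0)}" "(g0, i0) \<in> D"
    using x unfolding amalg_vert by blast
  have i0: "i0 \<in> {1,2}" "g0 \<in> generate G (al i0)" using x0(2) D_iff by auto
  have comp: "component \<beta> A x = (stp\<^sup>* `` {x}, \<lambda>e. if e \<in> \<beta> then snd A e \<inter> (stp\<^sup>* `` {x} \<times> stp\<^sup>* `` {x}) else {})"
    unfolding component_def Let_def by simp
  show ?thesis
  proof (cases "\<exists>a0 \<in> generate G (\<beta> \<inter> al i0). g0 \<otimes> a0 \<in> K")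
    case True
    then obtain a0 where a0: "a0 \<in> generate G (\<beta> \<inter> al i0)" "g0 \<otimes> a0 \<in> K" by blast
    have eq: "stp\<^sup>* `` {x} = Wg (g0 \<otimes> a0)" using glue_comp[OF a0(2) i0 a0(1)] x0(1) by simp
    have "egraph_iso E' (component \<beta> A x) T" unfolding comp eq by (rule glue_iso[OF a0(2)])
    then show ?thesis by simp
  next
    case False
    then have ng: "\<And>a. a \<in> generate G (\<beta> \<inter> al i0) \<Longrightarrow> g0 \<otimes> a \<notin> K" by blast
    have eq: "stp\<^sup>* `` {x} = Wn g0 i0" using ng_comp[OF i0 ng] x0(1) by simp
    have iso: "egraph_iso E' (component \<beta> A x) (Cay G (\<beta> \<inter> al i0))"
      unfolding comp eq by (rule ng_iso[OF i0 ng])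
    show ?thesis using i0(1) iso by (auto simp: gm_def)
  qed
qed

end

theorem mainTheorem10:
  fixes G :: "('g, 'b) monoid_scheme" and E \<alpha>1 \<alpha>2 \<beta> :: "'g set"
  assumes "E_group G E"
    and "\<alpha>1 \<subset> E" and "\<alpha>2 \<subset> E" and "\<beta> \<subset> E"
    and "two_acyclic G \<alpha>1" and "two_acyclic G \<alpha>2"
    and "x \<in> fst (amalgam G \<alpha>1 \<alpha>2)"
  shows "egraph_iso E (component \<beta> (amalgam G \<alpha>1 \<alpha>2) x) (Cay G (\<beta> \<inter> \<alpha>1)) \<or>
         egraph_iso E (component \<beta> (amalgam G \<alpha>1 \<alpha>2) x) (Cay G (\<beta> \<inter> \<alpha>2)) \<or>
         egraph_iso E (component \<beta> (amalgam G \<alpha>1 \<alpha>2) x)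
                      (amalgam G (\<beta> \<inter> \<alpha>1) (\<beta> \<inter> \<alpha>2))"
proof -
  have EG: "group G" "E \<subseteq> carrier G" "\<And>e. e \<in> E \<Longrightarrow> e \<otimes>\<^bsub>G\<^esub> e = \<one>\<^bsub>G\<^esub>"
    using assms(1) unfolding E_group_def by auto
  interpret amsetup G \<alpha>1 \<alpha>2 \<beta>
  proof (rule amsetup.intro[OF EG(1)], unfold_locales)
    show "\<alpha>1 \<subseteq> carrier G" using assms(2) EG(2) by blast
    show "\<alpha>2 \<subseteq> carrier G" using assms(3) EG(2) by blast
    show "\<And>e. e \<in> \<alpha>1 \<union> \<alpha>2 \<Longrightarrow> e \<otimes>\<^bsub>G\<^esub> e = \<one>\<^bsub>G\<^esub>" using assms(2,3) EG(3) by blast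
    show "two_acyclic G \<alpha>1" "two_acyclic G \<alpha>2" using assms(5,6) by auto
  qed
  show ?thesis using main_loc[OF assms(7)] .
qed

end
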